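(* Assume the setting below and sharp missingness: $M_i(1)=M_i(0)$ for all $i$. Fix $\boldsymbol\delta\in\mathbb R^n$ and let $\mathcal S=\{i:M_i=1\}$, $n_{\mathcal S1}=\sum_{i\in\mathcal S}Z_i$, $n_{\mathcal S0}=|\mathcal S|-n_{\mathcal S1}$. Define $t_{\mathrm R,\phi,\mathcal S}(\boldsymbol z,\boldsymbol y)=t_{\mathrm R,\phi}(\boldsymbol z_{\mathcal S},\boldsymbol y_{\mathcal S})$ (statistic computed on the subvectors indexed by $\mathcal S$, original order kept) and $G_{\mathrm R,\phi,\mathcal S}(c)=\mathbb P(t_{\mathrm R,\phi,\mathcal S}(\boldsymbol A,\boldsymbol y_0)\ge c)$, where $\boldsymbol A_{\mathcal S}$ is uniform over assignments of the units of $\mathcal S$ with exactly $n_{\mathcal S1}$ treated and $\boldsymbol y_0\in\mathbb R^n$ is any fixed vector. Then $p_{\boldsymbol Z,\boldsymbol\delta,\mathcal S}=G_{\mathrm R,\phi,\mathcal S}\big(t_{\mathrm R,\phi,\mathcal S}(\boldsymbol Z,\boldsymbol Y-\boldsymbol\delta\circ\boldsymbol Z)\big)$ is a valid p-value for $H_{\boldsymbol\delta}:\boldsymbol\tau=\boldsymbol\delta$: if $H_{\boldsymbol\delta}$ holds, $\mathbb P(p_{\boldsymbol Z,\boldsymbol\delta,\mathcal S}\le\alpha)\le\alpha$ for all $\alpha\in(0,1)$.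
   Context: There are $n$ units with fixed potential outcomes $Y_i^\star(0),Y_i^\star(1)\in\mathbb R$ and fixed potential missingness indicators $M_i(0),M_i(1)\in\{0,1\}$; $\tau_i=Y_i^\star(1)-Y_i^\star(0)$. $\boldsymbol Z\in\{0,1\}^n$ is from a completely randomized experiment: uniform over vectors with exactly $n_1$ ones ($n_1,n_0\ge1$ fixed, $n_1+n_0=n$), independent of all potential quantities; probabilities are over $\boldsymbol Z$. $M_i=Z_iM_i(1)+(1-Z_i)M_i(0)$; the realized outcome $Z_iY_i^\star(1)+(1-Z_i)Y_i^\star(0)$ is observed, denoted $Y_i$, iff $M_i=1$; only coordinates in $\mathcal S$ of $\boldsymbol Y-\boldsymbol\delta\circ\boldsymbol Z$ are used. $\circ$ is the entrywise product. $\psi_{i,j}(y,y')=\mathbf 1\{y>y'\}+\mathbf 1\{y=y'\}\mathbf 1\{i\ge j\}$; $\mathrm{rank}_i(\boldsymbol y)=\sum_j\psi_{i,j}(y_i,y_j)$; $\phi$ nondecreasing real function on the nonnegative integers; $t_{\mathrm R,\phi}(\boldsymbol z,\boldsymbol y)$ is either $\sum_i z_i\phi(\mathrm{rank}_i(\boldsymbol y))$ or $\sum_i z_i\phi(\sum_j(1-z_j)\psi_{i,j}(y_i,y_j))$ (sums over units of the given vectors); the result holds for either. *)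

theory Defs
  imports "HOL-Probability.Probability_Mass_Function"
begin

text \<open>Units are indexed by 0..<n. Assignment vectors and missingness indicators are
nat-valued 0/1 vectors (functions nat => nat), outcome vectors are nat => real.\<close>

definition psi :: "nat \<Rightarrow> nat \<Rightarrow> real \<Rightarrow> real \<Rightarrow> nat" where
  "psi i j y y' = (if y > y' then 1 else 0) + (if y = y' \<and> i \<ge> j then 1 else 0)"

definition rank_vec :: "nat \<Rightarrow> (nat \<Rightarrow> real) \<Rightarrow> nat \<Rightarrow> nat" where
  "rank_vec k y i = (\<Sum>j<k. psi i j (y i) (y j))"

definition t_rank :: "(nat \<Rightarrow> real) \<Rightarrow> nat \<Rightarrow> (nat \<Rightarrow> nat) \<Rightarrow> (nat \<Rightarrow> real) \<Rightarrow> real" where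
  "t_rank \<phi> k z y = (\<Sum>i<k. real (z i) * \<phi> (rank_vec k y i))"

definition t_ctrl :: "(nat \<Rightarrow> real) \<Rightarrow> nat \<Rightarrow> (nat \<Rightarrow> nat) \<Rightarrow> (nat \<Rightarrow> real) \<Rightarrow> real" where
  "t_ctrl \<phi> k z y = (\<Sum>i<k. real (z i) * \<phi> (\<Sum>j<k. (1 - z j) * psi i j (y i) (y j)))"

definition subvec :: "nat set \<Rightarrow> (nat \<Rightarrow> 'a) \<Rightarrow> nat \<Rightarrow> 'a" where
  "subvec S v k = v (sorted_list_of_set S ! k)"

definition t_sub :: "(nat \<Rightarrow> (nat \<Rightarrow> nat) \<Rightarrow> (nat \<Rightarrow> real) \<Rightarrow> real)
    \<Rightarrow> nat set \<Rightarrow> (nat \<Rightarrow> nat) \<Rightarrow> (nat \<Rightarrow> real) \<Rightarrow> real" where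
  "t_sub tR S z y = tR (card S) (subvec S z) (subvec S y)"

definition assignments :: "nat set \<Rightarrow> nat \<Rightarrow> (nat \<Rightarrow> nat) set" where
  "assignments I m = {z. (\<forall>i. z i \<le> 1) \<and> (\<forall>i. i \<notin> I \<longrightarrow> z i = 0) \<and> (\<Sum>i\<in>I. z i) = m}"

definition G_sub :: "(nat \<Rightarrow> (nat \<Rightarrow> nat) \<Rightarrow> (nat \<Rightarrow> real) \<Rightarrow> real)
    \<Rightarrow> nat set \<Rightarrow> nat \<Rightarrow> (nat \<Rightarrow> real) \<Rightarrow> real \<Rightarrow> real" where
  "G_sub tR S m y0 c = measure_pmf.prob (pmf_of_set (assignments S m)) {a. t_sub tR S a y0 \<ge> c}"

definition observed_set :: "nat \<Rightarrow> (nat \<Rightarrow> nat) \<Rightarrow> (nat \<Rightarrow> nat) \<Rightarrow> (nat \<Rightarrow> nat) \<Rightarrow> nat set" where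
  "observed_set n M0 M1 z = {i. i < n \<and> z i * M1 i + (1 - z i) * M0 i = 1}"

definition realized :: "(nat \<Rightarrow> real) \<Rightarrow> (nat \<Rightarrow> real) \<Rightarrow> (nat \<Rightarrow> nat) \<Rightarrow> nat \<Rightarrow> real" where
  "realized Y0 Y1 z i = real (z i) * Y1 i + (1 - real (z i)) * Y0 i"

definition p_value :: "(nat \<Rightarrow> (nat \<Rightarrow> nat) \<Rightarrow> (nat \<Rightarrow> real) \<Rightarrow> real) \<Rightarrow> nat
    \<Rightarrow> (nat \<Rightarrow> nat) \<Rightarrow> (nat \<Rightarrow> nat) \<Rightarrow> (nat \<Rightarrow> real) \<Rightarrow> (nat \<Rightarrow> real)
    \<Rightarrow> (nat \<Rightarrow> real) \<Rightarrow> (nat \<Rightarrow> real) \<Rightarrow> (nat \<Rightarrow> nat) \<Rightarrow> real" where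
  "p_value tR n M0 M1 Y0 Y1 \<delta> y0 z =
    (let S = observed_set n M0 M1 z
     in G_sub tR S (\<Sum>i\<in>S. z i) y0
          (t_sub tR S z (\<lambda>i. realized Y0 Y1 z i - \<delta> i * real (z i))))"

end

theory Submission
  imports Defs
begin

lemma assignments_finite:
  assumes "finite I" shows "finite (assignments I m)"
proof -
  have "assignments I m \<subseteq> (\<lambda>T i. if i \<in> T then 1 else 0) ` Pow I"
  proof
    fix z assume z: "z \<in> assignments I m"
    have "z = (\<lambda>i. if i \<in> {i\<in>I. z i = 1} then 1 else 0)"
    proof
      fix i show "z i = (if i \<in> {i\<in>I. z i = 1} then 1 else 0)"
        using z unfolding assignments_def by (cases "i \<in> I") (auto simp: le_Suc_eq)
    qed
    then show "z \<in> (\<lambda>T i. if i \<in> T then 1 else 0) ` Pow I" by blast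
  qed
  then show ?thesis using assms finite_subset by blast
qed

lemma assignments_bij:
  assumes h: "bij_betw h I J" and fI: "finite I"
  shows "bij_betw (\<lambda>a x. if x \<in> I then a (h x) else 0) (assignments J m) (assignments I m)"
proof -
  define h' where "h' = inv_into I h"
  have h'b: "bij_betw h' J I" using h bij_betw_inv_into h'_def by blast
  have hh': "\<And>y. y \<in> J \<Longrightarrow> h (h' y) = y" unfolding h'_def
    by (meson bij_betw_inv_into_right h)
  have h'h: "\<And>x. x \<in> I \<Longrightarrow> h' (h x) = x" unfolding h'_def
    by (meson bij_betw_inv_into_left h)
  have hJ: "\<And>x. x \<in> I \<Longrightarrow> h x \<in> J" using h bij_betwE by blast
  have h'I: "\<And>x. x \<in> J \<Longrightarrow> h' x \<in> I" using h'b bij_betwE by blast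
  show ?thesis
  proof (rule bij_betw_byWitness[where f'="\<lambda>b y. if y \<in> J then b (h' y) else 0"])
    show "\<forall>a\<in>assignments J m. (\<lambda>y. if y \<in> J then (if h' y \<in> I then a (h (h' y)) else 0) else 0) = a"
      using hh' h'I unfolding assignments_def by auto
    show "\<forall>a\<in>assignments I m. (\<lambda>x. if x \<in> I then (if h x \<in> J then a (h' (h x)) else 0) else 0) = a"
      using h'h hJ unfolding assignments_def by auto
    show "(\<lambda>a x. if x \<in> I then a (h x) else 0) ` assignments J m \<subseteq> assignments I m"
    proof
      fix b assume "b \<in> (\<lambda>a x. if x \<in> I then a (h x) else 0) ` assignments J m"
      then obtain a where a: "a \<in> assignments J m" and b: "b = (\<lambda>x. if x \<in> I then a (h x) else 0)" by blast
      have "(\<Sum>x\<in>I. b x) = (\<Sum>x\<in>I. a (h x))" using b by simp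
      also have "\<dots> = (\<Sum>y\<in>J. a y)" using sum.reindex_bij_betw[OF h] by simp
      finally show "b \<in> assignments I m" using a b unfolding assignments_def by auto
    qed
    show "(\<lambda>b y. if y \<in> J then b (h' y) else 0) ` assignments I m \<subseteq> assignments J m"
    proof
      fix b assume "b \<in> (\<lambda>a y. if y \<in> J then a (h' y) else 0) ` assignments I m"
      then obtain a where a: "a \<in> assignments I m" and b: "b = (\<lambda>y. if y \<in> J then a (h' y) else 0)" by blast
      have "(\<Sum>x\<in>J. b x) = (\<Sum>x\<in>J. a (h' x))" using b by simp
      also have "\<dots> = (\<Sum>y\<in>I. a y)" using sum.reindex_bij_betw[OF h'b] by simp
      finally show "b \<in> assignments J m" using a b unfolding assignments_def by auto
    qed
  qed
qed


definition ltw :: "(nat \<Rightarrow> real) \<Rightarrow> nat \<Rightarrow> nat \<Rightarrow> bool" where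
  "ltw w j i \<longleftrightarrow> w j < w i \<or> (w j = w i \<and> j < i)"

definition sig :: "nat \<Rightarrow> (nat \<Rightarrow> real) \<Rightarrow> nat \<Rightarrow> nat" where
  "sig k w i = card {j\<in>{0..<k}. ltw w j i}"

lemma psi_ltw: "psi i j (w i) (w j) = (if ltw w j i \<or> j = i then 1 else 0)"
  unfolding psi_def ltw_def by auto

lemma ltw_trans: "ltw w a b \<Longrightarrow> ltw w b c \<Longrightarrow> ltw w a c"
  unfolding ltw_def by auto

lemma ltw_irrefl: "\<not> ltw w a a" unfolding ltw_def by auto

lemma ltw_total: "a \<noteq> b \<Longrightarrow> ltw w a b \<or> ltw w b a" unfolding ltw_def by auto

lemma sig_less: assumes "i < k" "j < k" "ltw w j i" shows "sig k w j < sig k w i"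
  unfolding sig_def
proof (rule psubset_card_mono)
  have "{l \<in> {0..<k}. ltw w l j} \<subseteq> {l \<in> {0..<k}. ltw w l i}"
    using assms(3) ltw_trans[of w _ j i] by blast
  moreover have "j \<in> {l \<in> {0..<k}. ltw w l i}" using assms by simp
  moreover have "j \<notin> {l \<in> {0..<k}. ltw w l j}" using ltw_irrefl by simp
  ultimately show "{l \<in> {0..<k}. ltw w l j} \<subset> {l \<in> {0..<k}. ltw w l i}" by blast
qed simp

lemma sig_range: assumes "i < k" shows "sig k w i < k"
proof -
  have "i \<notin> {l \<in> {0..<k}. ltw w l i}" using ltw_irrefl by simp
  moreover have "i \<in> {0..<k}" using assms by simp
  moreover have "{l \<in> {0..<k}. ltw w l i} \<subseteq> {0..<k}" by blast
  ultimately have "{l \<in> {0..<k}. ltw w l i} \<subset> {0..<k}" by blast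
  then have "card {l \<in> {0..<k}. ltw w l i} < card {0..<k}" by (intro psubset_card_mono) simp_all
  then show ?thesis unfolding sig_def by simp
qed

lemma sig_le_iff: assumes "i < k" "j < k"
  shows "sig k w j \<le> sig k w i \<longleftrightarrow> (ltw w j i \<or> j = i)"
proof
  assume h: "sig k w j \<le> sig k w i"
  show "ltw w j i \<or> j = i"
  proof (rule ccontr)
    assume "\<not> (ltw w j i \<or> j = i)"
    then have "ltw w i j" using ltw_total[of j i w] by blast
    then have "sig k w i < sig k w j" using sig_less[OF assms(2,1)] by blast
    then show False using h by simp
  qed
next
  assume "ltw w j i \<or> j = i"
  then show "sig k w j \<le> sig k w i"
  proof
    assume "ltw w j i" then show ?thesis using sig_less[OF assms, of w] less_imp_le by blast
  qed simp
qed

lemma sig_bij: "bij_betw (sig k w) {0..<k} {0..<k}"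
proof -
  have inj: "inj_on (sig k w) {0..<k}"
  proof (rule inj_onI)
    fix i j assume "i \<in> {0..<k}" "j \<in> {0..<k}" "sig k w i = sig k w j"
    then have "(ltw w j i \<or> j = i) \<and> (ltw w i j \<or> i = j)" using sig_le_iff[of i k j w] sig_le_iff[of j k i w] by simp
    then show "i = j" using ltw_trans[of w i j i] ltw_irrefl[of w i] by blast
  qed
  moreover have "sig k w ` {0..<k} \<subseteq> {0..<k}" using sig_range by auto
  ultimately have "sig k w ` {0..<k} = {0..<k}" using endo_inj_surj by blast
  then show ?thesis using inj bij_betw_def by blast
qed

lemma psi_sig: assumes "i < k" "j < k"
  shows "psi i j (w i) (w j) = (if sig k w j \<le> sig k w i then 1 else 0)"
  using psi_ltw sig_le_iff[OF assms] by simp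

lemma stat_form:
  assumes "tR = t_rank \<phi> \<or> tR = t_ctrl \<phi>"
  shows "\<exists>gg. \<forall>k z w. tR k z w = (\<Sum>i<k. real (z i) * \<phi> (\<Sum>j<k. gg (z j) * psi i j (w i) (w j)))"
  using assms
proof
  assume "tR = t_rank \<phi>"
  then show ?thesis by (intro exI[of _ "\<lambda>_. 1"]) (simp add: t_rank_def rank_vec_def)
next
  assume "tR = t_ctrl \<phi>"
  then show ?thesis by (intro exI[of _ "\<lambda>x. 1 - x"]) (simp add: t_ctrl_def)
qed

definition Hs :: "(nat \<Rightarrow> nat) \<Rightarrow> (nat \<Rightarrow> real) \<Rightarrow> nat \<Rightarrow> (nat \<Rightarrow> nat) \<Rightarrow> real" where
  "Hs gg \<phi> k u = (\<Sum>p<k. real (u p) * \<phi> (\<Sum>q<k. gg (u q) * (if q \<le> p then 1 else 0)))"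

lemma Hs_local: "(\<And>p. p < k \<Longrightarrow> u p = u' p) \<Longrightarrow> Hs gg \<phi> k u = Hs gg \<phi> k u'"
  unfolding Hs_def by (intro sum.cong refl) simp_all

lemma stat_Hs:
  fixes gg :: "nat \<Rightarrow> nat" and k :: nat and w :: "nat \<Rightarrow> real"
  defines "\<tau> \<equiv> inv_into {0..<k} (sig k w)"
  shows "(\<Sum>i<k. real (z i) * \<phi> (\<Sum>j<k. gg (z j) * psi i j (w i) (w j)))
       = Hs gg \<phi> k (\<lambda>p. z (\<tau> p))"
proof -
  let ?s = "sig k w"
  have tb: "bij_betw \<tau> {0..<k} {0..<k}" unfolding \<tau>_def using sig_bij bij_betw_inv_into by blast
  have st: "\<And>p. p < k \<Longrightarrow> ?s (\<tau> p) = p" unfolding \<tau>_def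
    by (metis atLeastLessThan_iff bij_betw_inv_into_right sig_bij zero_le)
  have tk: "\<And>p. p < k \<Longrightarrow> \<tau> p < k" using tb bij_betwE by fastforce
  have "(\<Sum>i<k. real (z i) * \<phi> (\<Sum>j<k. gg (z j) * psi i j (w i) (w j)))
      = (\<Sum>i\<in>{0..<k}. real (z i) * \<phi> (\<Sum>j\<in>{0..<k}. gg (z j) * (if ?s j \<le> ?s i then 1 else 0)))"
    by (intro sum.cong refl) (auto simp: psi_sig atLeast0LessThan)
  also have "\<dots> = (\<Sum>p\<in>{0..<k}. real (z (\<tau> p)) * \<phi> (\<Sum>j\<in>{0..<k}. gg (z j) * (if ?s j \<le> ?s (\<tau> p) then 1 else 0)))"
    using sum.reindex_bij_betw[OF tb, where g="\<lambda>i. real (z i) * \<phi> (\<Sum>j\<in>{0..<k}. gg (z j) * (if ?s j \<le> ?s i then 1 else 0))"] by simp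
  also have "\<dots> = (\<Sum>p\<in>{0..<k}. real (z (\<tau> p)) * \<phi> (\<Sum>q\<in>{0..<k}. gg (z (\<tau> q)) * (if q \<le> p then 1 else 0)))"
  proof (intro sum.cong refl)
    fix p assume p: "p \<in> {0..<k}"
    have "(\<Sum>j\<in>{0..<k}. gg (z j) * (if ?s j \<le> ?s (\<tau> p) then 1 else 0))
        = (\<Sum>q\<in>{0..<k}. gg (z (\<tau> q)) * (if ?s (\<tau> q) \<le> ?s (\<tau> p) then 1 else 0))"
      using sum.reindex_bij_betw[OF tb, where g="\<lambda>j. gg (z j) * (if ?s j \<le> ?s (\<tau> p) then 1 else 0)"] by simp
    also have "\<dots> = (\<Sum>q\<in>{0..<k}. gg (z (\<tau> q)) * (if q \<le> p then 1 else 0))"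
      using p st by (intro sum.cong refl) auto
    finally show "real (z (\<tau> p)) * \<phi> (\<Sum>j\<in>{0..<k}. gg (z j) * (if ?s j \<le> ?s (\<tau> p) then 1 else 0))
       = real (z (\<tau> p)) * \<phi> (\<Sum>q\<in>{0..<k}. gg (z (\<tau> q)) * (if q \<le> p then 1 else 0))" by (simp only:)
  qed
  also have "\<dots> = Hs gg \<phi> k (\<lambda>p. z (\<tau> p))" unfolding Hs_def atLeast0LessThan ..
  finally show ?thesis .
qed


lemma e_bij: "finite S \<Longrightarrow> bij_betw (\<lambda>p. sorted_list_of_set S ! p) {0..<card S} S"
  using bij_betw_nth[of "sorted_list_of_set S" "{0..<card S}" S] by (simp add: atLeast0LessThan)

lemma e_mem: "finite S \<Longrightarrow> p < card S \<Longrightarrow> sorted_list_of_set S ! p \<in> S"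
  using e_bij bij_betwE by fastforce

lemma tR_local:
  assumes stat: "tR = t_rank \<phi> \<or> tR = t_ctrl \<phi>"
    and "\<And>p. p < k \<Longrightarrow> z p = z' p" "\<And>p. p < k \<Longrightarrow> w p = w' p"
  shows "tR k z w = tR k z' w'"
proof -
  obtain gg where gg: "\<And>k z w. tR k z w = (\<Sum>i<k. real (z i) * \<phi> (\<Sum>j<k. gg (z j) * psi i j (w i) (w j)))"
    using stat_form[OF stat] by blast
  show ?thesis unfolding gg using assms(2,3) by (intro sum.cong refl) simp_all
qed

lemma G_card:
  assumes stat: "tR = t_rank \<phi> \<or> tR = t_ctrl \<phi>" and fS: "finite S"
    and ne: "assignments S m \<noteq> {}"
  shows "\<exists>gg. \<forall>y c. G_sub tR S m y c
     = card {u\<in>assignments {0..<card S} m. c \<le> Hs gg \<phi> (card S) u} / card (assignments S m)"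
proof -
  obtain gg where gg: "\<And>k z w. tR k z w = (\<Sum>i<k. real (z i) * \<phi> (\<Sum>j<k. gg (z j) * psi i j (w i) (w j)))"
    using stat_form[OF stat] by blast
  have "G_sub tR S m y c
     = card {u\<in>assignments {0..<card S} m. c \<le> Hs gg \<phi> (card S) u} / card (assignments S m)" for y c
  proof -
    define k where "k = card S"
    define w where "w = subvec S y"
    define \<tau> where "\<tau> = inv_into {0..<k} (sig k w)"
    define h where "h = (\<lambda>p. sorted_list_of_set S ! (\<tau> p))"
    have tb: "bij_betw \<tau> {0..<k} {0..<k}" unfolding \<tau>_def using sig_bij bij_betw_inv_into by blast
    have eb: "bij_betw (\<lambda>p. sorted_list_of_set S ! p) {0..<k} S" unfolding k_def using e_bij[OF fS] .
    have hb: "bij_betw h {0..<k} S" unfolding h_def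
      using bij_betw_trans[OF tb eb] by (simp add: comp_def)
    define \<Phi> where "\<Phi> = (\<lambda>a x. if x \<in> {0..<k} then a (h x) else (0::nat))"
    have Pb: "bij_betw \<Phi> (assignments S m) (assignments {0..<k} m)"
      unfolding \<Phi>_def by (rule assignments_bij[OF hb]) simp
    let ?A = "assignments S m"
    let ?P = "\<lambda>u. c \<le> Hs gg \<phi> k u"
    have tsub: "t_sub tR S a y = Hs gg \<phi> k (\<Phi> a)" for a
    proof -
      have "t_sub tR S a y = Hs gg \<phi> k (\<lambda>p. subvec S a (\<tau> p))"
        unfolding t_sub_def gg k_def[symmetric] w_def[symmetric] \<tau>_def by (rule stat_Hs)
      also have "\<dots> = Hs gg \<phi> k (\<Phi> a)"
        by (rule Hs_local) (simp add: \<Phi>_def h_def subvec_def)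
      finally show ?thesis .
    qed
    have inj: "inj_on \<Phi> ?A" using Pb bij_betw_def by blast
    have im0: "\<Phi> ` ?A = assignments {0..<k} m" using Pb bij_betw_imp_surj_on by blast
    have im1: "\<Phi> ` {a\<in>?A. ?P (\<Phi> a)} = {u\<in>\<Phi> ` ?A. ?P u}" by blast
    have img: "\<Phi> ` {a\<in>?A. ?P (\<Phi> a)} = {u\<in>assignments {0..<k} m. ?P u}"
      using im0 im1 by simp
    have "card {a\<in>?A. ?P (\<Phi> a)} = card {u\<in>assignments {0..<k} m. ?P u}"
      using card_image[OF inj_on_subset[OF inj, of "{a\<in>?A. ?P (\<Phi> a)}"]] img by (simp add: subset_iff)
    moreover have "?A \<inter> {a. c \<le> t_sub tR S a y} = {a\<in>?A. ?P (\<Phi> a)}" using tsub by (simp add: set_eq_iff)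
    ultimately show ?thesis
      unfolding G_sub_def measure_pmf_of_set[OF ne assignments_finite[OF fS]] k_def by simp
  qed
  then show ?thesis by blast
qed

lemma pval_count:
  fixes T :: "'a \<Rightarrow> real"
  assumes fA: "finite A" and al: "0 \<le> \<alpha>"
  shows "real (card {a\<in>A. real (card {b\<in>A. T a \<le> T b}) / card A \<le> \<alpha>}) \<le> \<alpha> * card A"
proof (cases "{a\<in>A. real (card {b\<in>A. T a \<le> T b}) / card A \<le> \<alpha>} = {}")
  case True then show ?thesis using al by (metis card.empty of_nat_0 of_nat_0_le_iff mult_nonneg_nonneg)
next
  case False
  define B where "B = {a\<in>A. real (card {b\<in>A. T a \<le> T b}) / card A \<le> \<alpha>}"
  have fB: "finite B" using fA B_def by simp
  have neB: "B \<noteq> {}" using False B_def by simp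
  have "Min (T ` B) \<in> T ` B" using fB neB by simp
  then obtain a0 where a0: "a0 \<in> B" "T a0 = Min (T ` B)" by auto
  have le: "\<And>a. a \<in> B \<Longrightarrow> T a0 \<le> T a" using a0(2) fB by simp
  have sub: "B \<subseteq> {b\<in>A. T a0 \<le> T b}" using le B_def by auto
  have cA: "card A > 0" using a0(1) fA B_def card_gt_0_iff by blast
  have "real (card B) \<le> card {b\<in>A. T a0 \<le> T b}" using card_mono[OF _ sub] fA by simp
  also have "\<dots> \<le> \<alpha> * card A" using a0(1) cA unfolding B_def by (simp add: divide_le_eq)
  finally show ?thesis unfolding B_def .
qed


lemma decomp_bij:
  assumes fU: "finite U" and SU: "S \<subseteq> U"
  shows "bij_betw (\<lambda>(m, a, b) i. a i + b i)
     (SIGMA m:{0..n1}. assignments S m \<times> assignments (U - S) (n1 - m)) (assignments U n1)"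
proof -
  have fS: "finite S" using fU SU finite_subset by blast
  have fD: "finite (U - S)" using fU by simp
  have sumU: "(\<Sum>i\<in>U. a i) = (\<Sum>i\<in>S. a i)" if "\<forall>i. i \<notin> S \<longrightarrow> a i = 0" for a :: "nat \<Rightarrow> nat"
    using that SU fU by (intro sum.mono_neutral_right) auto
  have sumUD: "(\<Sum>i\<in>U. a i) = (\<Sum>i\<in>U-S. a i)" if "\<forall>i. i \<notin> U - S \<longrightarrow> a i = 0" for a :: "nat \<Rightarrow> nat"
    using that fU by (intro sum.mono_neutral_right) auto
  show ?thesis
  proof (rule bij_betw_byWitness[where f'="\<lambda>z. ((\<Sum>i\<in>S. z i), (\<lambda>i. if i \<in> S then z i else 0), (\<lambda>i. if i \<in> U - S then z i else 0))"])
    show "\<forall>x\<in>(SIGMA m:{0..n1}. assignments S m \<times> assignments (U - S) (n1 - m)).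
       (\<lambda>z. ((\<Sum>i\<in>S. z i), (\<lambda>i. if i \<in> S then z i else 0), (\<lambda>i. if i \<in> U - S then z i else 0)))
         ((\<lambda>(m, a, b) i. a i + b i) x) = x"
    proof
      fix x assume "x \<in> (SIGMA m:{0..n1}. assignments S m \<times> assignments (U - S) (n1 - m))"
      then obtain m a b where x: "x = (m, a, b)" and a: "a \<in> assignments S m"
        and b: "b \<in> assignments (U - S) (n1 - m)" by blast
      have bS: "\<And>i. i \<in> S \<Longrightarrow> b i = 0" using b unfolding assignments_def by auto
      have aS: "\<And>i. i \<notin> S \<Longrightarrow> a i = 0" using a unfolding assignments_def by auto
      have "(\<Sum>i\<in>S. a i + b i) = (\<Sum>i\<in>S. a i)" using bS by simp
      also have "\<dots> = m" using a unfolding assignments_def by simp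
      finally have 1: "(\<Sum>i\<in>S. a i + b i) = m" .
      have 2: "(\<lambda>i. if i \<in> S then a i + b i else 0) = a" using aS bS by auto
      have 3: "(\<lambda>i. if i \<in> U - S then a i + b i else 0) = b" using aS b unfolding assignments_def by auto
      show "(\<lambda>z. ((\<Sum>i\<in>S. z i), (\<lambda>i. if i \<in> S then z i else 0), (\<lambda>i. if i \<in> U - S then z i else 0)))
         ((\<lambda>(m, a, b) i. a i + b i) x) = x"
      proof -
        have "((\<Sum>i\<in>S. a i + b i), (\<lambda>i. if i \<in> S then a i + b i else 0), (\<lambda>i. if i \<in> U - S then a i + b i else 0)) = (m, a, b)"
          using 1 2 3 by simp
        then show ?thesis unfolding x prod.case .
      qed
    qed
    show "\<forall>z\<in>assignments U n1. (\<lambda>(m, a, b) i. a i + b i)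
        ((\<Sum>i\<in>S. z i), (\<lambda>i. if i \<in> S then z i else 0), (\<lambda>i. if i \<in> U - S then z i else 0)) = z"
      using SU unfolding assignments_def by auto
    show "(\<lambda>(m, a, b) i. a i + b i) ` (SIGMA m:{0..n1}. assignments S m \<times> assignments (U - S) (n1 - m))
        \<subseteq> assignments U n1"
    proof
      fix z assume "z \<in> (\<lambda>(m, a, b) i. a i + b i) ` (SIGMA m:{0..n1}. assignments S m \<times> assignments (U - S) (n1 - m))"
      then obtain m a b where z: "z = (\<lambda>i. a i + b i)" and m: "m \<le> n1" and a: "a \<in> assignments S m"
        and b: "b \<in> assignments (U - S) (n1 - m)" by auto
      have bS: "\<forall>i. i \<notin> U - S \<longrightarrow> b i = 0" using b unfolding assignments_def by auto
      have aS: "\<forall>i. i \<notin> S \<longrightarrow> a i = 0" using a unfolding assignments_def by auto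
      have "(\<Sum>i\<in>U. z i) = (\<Sum>i\<in>U. a i) + (\<Sum>i\<in>U. b i)" using z by (simp add: sum.distrib)
      also have "\<dots> = (\<Sum>i\<in>S. a i) + (\<Sum>i\<in>U-S. b i)" using sumU[OF aS] sumUD[OF bS] by simp
      also have "\<dots> = n1" using a b m unfolding assignments_def by simp
      finally have s: "(\<Sum>i\<in>U. z i) = n1" .
      have a1: "\<forall>i. a i \<le> 1" and b1: "\<forall>i. b i \<le> 1" using a b unfolding assignments_def by auto
      have "z i \<le> 1" for i
      proof (cases "i \<in> S")
        case True then have "b i = 0" using bS by blast
        then show ?thesis using a1 z by simp
      next
        case False then have "a i = 0" using aS by blast
        then show ?thesis using b1 z by simp
      qed
      then have "\<forall>i. z i \<le> 1" by blast
      moreover have "\<forall>i. i \<notin> U \<longrightarrow> z i = 0" using aS bS SU z by auto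
      ultimately show "z \<in> assignments U n1" using s unfolding assignments_def by simp
    qed
    show "(\<lambda>z. ((\<Sum>i\<in>S. z i), (\<lambda>i. if i \<in> S then z i else 0), (\<lambda>i. if i \<in> U - S then z i else 0)))
       ` assignments U n1 \<subseteq> (SIGMA m:{0..n1}. assignments S m \<times> assignments (U - S) (n1 - m))"
    proof
      fix x assume "x \<in> (\<lambda>z. ((\<Sum>i\<in>S. z i), (\<lambda>i. if i \<in> S then z i else 0), (\<lambda>i. if i \<in> U - S then z i else 0)))
       ` assignments U n1"
      then obtain z where x: "x = ((\<Sum>i\<in>S. z i), (\<lambda>i. if i \<in> S then z i else 0), (\<lambda>i. if i \<in> U - S then z i else 0))"
        and z: "z \<in> assignments U n1" by blast
      have sU: "(\<Sum>i\<in>U. z i) = n1" using z unfolding assignments_def by simp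
      have split: "(\<Sum>i\<in>U. z i) = (\<Sum>i\<in>S. z i) + (\<Sum>i\<in>U-S. z i)"
        using sum.subset_diff[OF SU fU, of z] by simp
      have le: "(\<Sum>i\<in>S. z i) \<le> n1" using sU split by simp
      have "(\<lambda>i. if i \<in> S then z i else 0) \<in> assignments S (\<Sum>i\<in>S. z i)"
        using z unfolding assignments_def by auto
      moreover have "(\<lambda>i. if i \<in> U - S then z i else 0) \<in> assignments (U - S) (n1 - (\<Sum>i\<in>S. z i))"
        using z sU split unfolding assignments_def by auto
      ultimately show "x \<in> (SIGMA m:{0..n1}. assignments S m \<times> assignments (U - S) (n1 - m))"
        using x le by auto
    qed
  qed
qed

lemma decomp_sum:
  fixes h :: "(nat \<Rightarrow> nat) \<Rightarrow> real"
  assumes fU: "finite U" and SU: "S \<subseteq> U"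
  shows "(\<Sum>z\<in>assignments U n1. h z)
    = (\<Sum>m\<in>{0..n1}. \<Sum>a\<in>assignments S m. \<Sum>b\<in>assignments (U - S) (n1 - m). h (\<lambda>i. a i + b i))"
proof -
  have fS: "finite S" using fU SU finite_subset by blast
  have fD: "finite (U - S)" using fU by simp
  have "(\<Sum>z\<in>assignments U n1. h z)
     = (\<Sum>x\<in>(SIGMA m:{0..n1}. assignments S m \<times> assignments (U - S) (n1 - m)). h ((\<lambda>(m, a, b) i. a i + b i) x))"
    using sum.reindex_bij_betw[OF decomp_bij[OF fU SU, of n1], of h] by simp
  also have "\<dots> = (\<Sum>m\<in>{0..n1}. \<Sum>x\<in>assignments S m \<times> assignments (U - S) (n1 - m). h ((\<lambda>(m, a, b) i. a i + b i) (m, x)))"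
    by (subst sum.Sigma) (auto simp: split_def intro: assignments_finite fS fD)
  also have "\<dots> = (\<Sum>m\<in>{0..n1}. \<Sum>a\<in>assignments S m. \<Sum>b\<in>assignments (U - S) (n1 - m). h (\<lambda>i. a i + b i))"
    by (intro sum.cong refl) (simp add: sum.cartesian_product split_def)
  finally show ?thesis .
qed


theorem theorem8:
  fixes n n1 :: nat
    and M0 M1 :: "nat \<Rightarrow> nat"
    and Y0 Y1 \<delta> y0 :: "nat \<Rightarrow> real"
    and \<phi> :: "nat \<Rightarrow> real"
    and tR :: "nat \<Rightarrow> (nat \<Rightarrow> nat) \<Rightarrow> (nat \<Rightarrow> real) \<Rightarrow> real"
    and \<alpha> :: real
  assumes n1_pos: "1 \<le> n1" and n0_pos: "n1 < n"
    and M_bin: "\<forall>i<n. M0 i \<le> 1 \<and> M1 i \<le> 1"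
    and sharp: "\<forall>i<n. M1 i = M0 i"
    and mono_phi: "mono \<phi>"
    and stat: "tR = t_rank \<phi> \<or> tR = t_ctrl \<phi>"
    and H_delta: "\<forall>i<n. Y1 i - Y0 i = \<delta> i"
    and alpha: "0 < \<alpha>" "\<alpha> < 1"
  shows "measure_pmf.prob (pmf_of_set (assignments {0..<n} n1))
           {z. p_value tR n M0 M1 Y0 Y1 \<delta> y0 z \<le> \<alpha>} \<le> \<alpha>"
proof -
  define U where "U = {0..<n}"
  define S where "S = {i. i < n \<and> M0 i = 1}"
  define r where "r = (\<lambda>(z::nat\<Rightarrow>nat) i. if i \<in> S then z i else 0)"
  define Q where "Q = (\<lambda>a. G_sub tR S (\<Sum>i\<in>S. a i) y0 (t_sub tR S a Y0))"
  have fU: "finite U" unfolding U_def by simp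
  have SU: "S \<subseteq> U" unfolding S_def U_def by auto
  have fS: "finite S" using fU SU finite_subset by blast
  let ?A = "assignments U n1"
  have fA: "finite ?A" using assignments_finite[OF fU] .
  have neA: "?A \<noteq> {}"
  proof -
    have e: "{0..<n} \<inter> {i. i < n1} = {0..<n1}" using n0_pos by auto
    have "(\<lambda>i. if i < n1 then 1 else 0) \<in> ?A"
      unfolding assignments_def U_def using n0_pos by (simp add: sum.If_cases e)
    then show ?thesis by blast
  qed
  have pz: "p_value tR n M0 M1 Y0 Y1 \<delta> y0 z = Q (r z)" if z: "z \<in> ?A" for z
  proof -
    have zb: "\<forall>i. z i \<le> 1" and z0: "\<forall>i. i \<notin> U \<longrightarrow> z i = 0" using z unfolding assignments_def by auto
    have obs: "observed_set n M0 M1 z = S"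
    proof -
      have "z i * M1 i + (1 - z i) * M0 i = M0 i" if "i < n" for i
        using zb[rule_format, of i] sharp that by (cases "z i") auto
      then show ?thesis unfolding observed_set_def S_def by (metis (no_types, lifting))
    qed
    have s: "(\<Sum>i\<in>S. z i) = (\<Sum>i\<in>S. r z i)" unfolding r_def by simp
    have t: "t_sub tR S z (\<lambda>i. realized Y0 Y1 z i - \<delta> i * real (z i)) = t_sub tR S (r z) Y0"
      unfolding t_sub_def
    proof (rule tR_local[OF stat])
      fix p assume p: "p < card S"
      have e: "sorted_list_of_set S ! p \<in> S" using e_mem[OF fS p] .
      then show "subvec S z p = subvec S (r z) p" unfolding subvec_def r_def by simp
      have "sorted_list_of_set S ! p < n" using e SU U_def by auto
      then show "subvec S (\<lambda>i. realized Y0 Y1 z i - \<delta> i * real (z i)) p = subvec S Y0 p"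
        unfolding subvec_def realized_def using H_delta
        by (auto simp: algebra_simps)
    qed
    show ?thesis unfolding p_value_def Let_def obs Q_def s t ..
  qed
  have rab: "r (\<lambda>i. a i + b i) = a" if "a \<in> assignments S m" "b \<in> assignments (U - S) k" for a b m k
    using that unfolding r_def assignments_def by auto
  have sra: "(\<Sum>i\<in>S. a i) = m" if "a \<in> assignments S m" for a m
    using that unfolding assignments_def by auto
  have perm: "real (card {a\<in>assignments S m. Q a \<le> \<alpha>}) \<le> \<alpha> * card (assignments S m)" for m
  proof (cases "assignments S m = {}")
    case True then show ?thesis by simp
  next
    case False
    let ?B = "assignments S m"
    define T where "T = (\<lambda>a. t_sub tR S a Y0)"
    obtain gg where gg: "\<And>y c. G_sub tR S m y c
     = card {u\<in>assignments {0..<card S} m. c \<le> Hs gg \<phi> (card S) u} / card ?B"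
      using G_card[OF stat fS False] by blast
    have "Q a = real (card {b\<in>?B. T a \<le> T b}) / card ?B" if a: "a \<in> ?B" for a
    proof -
      have "Q a = G_sub tR S m y0 (T a)" unfolding Q_def T_def sra[OF a] ..
      also have "\<dots> = G_sub tR S m Y0 (T a)" unfolding gg ..
      also have "\<dots> = real (card (?B \<inter> {b. T a \<le> T b})) / card ?B"
        unfolding G_sub_def measure_pmf_of_set[OF False assignments_finite[OF fS]] T_def ..
      also have "?B \<inter> {b. T a \<le> T b} = {b\<in>?B. T a \<le> T b}" by blast
      finally show ?thesis .
    qed
    then have "{a\<in>?B. Q a \<le> \<alpha>} = {a\<in>?B. real (card {b\<in>?B. T a \<le> T b}) / card ?B \<le> \<alpha>}"
      by auto
    then show ?thesis using pval_count[OF assignments_finite[OF fS], where T=T and \<alpha>=\<alpha>] alpha by simp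
  qed
  define ind where "ind = (\<lambda>z. if p_value tR n M0 M1 Y0 Y1 \<delta> y0 z \<le> \<alpha> then (1::real) else 0)"
  have "real (card (?A \<inter> {z. p_value tR n M0 M1 Y0 Y1 \<delta> y0 z \<le> \<alpha>}))
      = (\<Sum>z\<in>?A. ind z)"
  proof -
    have "?A \<inter> {z. p_value tR n M0 M1 Y0 Y1 \<delta> y0 z \<le> \<alpha>} = {z\<in>?A. p_value tR n M0 M1 Y0 Y1 \<delta> y0 z \<le> \<alpha>}" by blast
    moreover have "real (card {z\<in>?A. p_value tR n M0 M1 Y0 Y1 \<delta> y0 z \<le> \<alpha>}) = (\<Sum>z\<in>?A. ind z)"
      unfolding ind_def using sum.inter_filter[OF fA, of "\<lambda>_. (1::real)"] by simp
    ultimately show ?thesis by simp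
  qed
  also have "\<dots> = (\<Sum>z\<in>?A. (if Q (r z) \<le> \<alpha> then 1 else 0))"
    unfolding ind_def using pz by (intro sum.cong refl) simp
  also have "\<dots> = (\<Sum>m\<in>{0..n1}. \<Sum>a\<in>assignments S m. \<Sum>b\<in>assignments (U - S) (n1 - m).
       (if Q (r (\<lambda>i. a i + b i)) \<le> \<alpha> then 1 else 0))"
    by (rule decomp_sum[OF fU SU])
  also have "\<dots> = (\<Sum>m\<in>{0..n1}. real (card (assignments (U - S) (n1 - m))) *
       real (card {a\<in>assignments S m. Q a \<le> \<alpha>}))"
  proof (intro sum.cong refl)
    fix m
    have "(\<Sum>a\<in>assignments S m. \<Sum>b\<in>assignments (U - S) (n1 - m). (if Q (r (\<lambda>i. a i + b i)) \<le> \<alpha> then 1 else 0))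
        = (\<Sum>a\<in>assignments S m. \<Sum>b\<in>assignments (U - S) (n1 - m). (if Q a \<le> \<alpha> then (1::real) else 0))"
      using rab by (intro sum.cong refl) auto
    also have "\<dots> = real (card (assignments (U - S) (n1 - m))) * (\<Sum>a\<in>assignments S m. (if Q a \<le> \<alpha> then (1::real) else 0))"
      by (simp add: sum_distrib_left mult.commute)
    also have "(\<Sum>a\<in>assignments S m. (if Q a \<le> \<alpha> then (1::real) else 0)) = real (card {a\<in>assignments S m. Q a \<le> \<alpha>})"
      using sum.inter_filter[OF assignments_finite[OF fS], of "\<lambda>_. (1::real)"] by simp
    finally show "(\<Sum>a\<in>assignments S m. \<Sum>b\<in>assignments (U - S) (n1 - m). (if Q (r (\<lambda>i. a i + b i)) \<le> \<alpha> then 1 else 0))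
        = real (card (assignments (U - S) (n1 - m))) * real (card {a\<in>assignments S m. Q a \<le> \<alpha>})" .
  qed
  also have "\<dots> \<le> (\<Sum>m\<in>{0..n1}. real (card (assignments (U - S) (n1 - m))) * (\<alpha> * card (assignments S m)))"
    by (intro sum_mono mult_left_mono perm) simp
  also have "\<dots> = \<alpha> * (\<Sum>m\<in>{0..n1}. \<Sum>a\<in>assignments S m. \<Sum>b\<in>assignments (U - S) (n1 - m). (1::real))"
    by (simp add: sum_distrib_left mult.commute mult.left_commute mult.assoc)
  also have "\<dots> = \<alpha> * (\<Sum>z\<in>?A. (1::real))"
    by (subst decomp_sum[OF fU SU]) simp
  also have "\<dots> = \<alpha> * card ?A" by simp
  finally have main: "real (card (?A \<inter> {z. p_value tR n M0 M1 Y0 Y1 \<delta> y0 z \<le> \<alpha>})) \<le> \<alpha> * card ?A" .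
  have cA: "card ?A > 0" using fA neA card_gt_0_iff by blast
  show ?thesis
    unfolding measure_pmf_of_set[OF neA fA] U_def[symmetric]
    using main cA by (simp add: divide_le_eq)
qed

end
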